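(* Let $C,C'',C'$ be three columns of the diagram of a composition of $n$, all of the same height $s$, with $C$ to the left of $C''$ and $C''$ to the left of $C'$, and such that $C''$ is the only column of height $s$ lying strictly between $C$ and $C'$ (so $(C,C'')$ and $(C'',C')$ are pairs of neighbouring columns). Then there is a non-zero scalar $\lambda\in\mathbb C$ such that $$f_{C,C'}=\lambda\, f_{C,C''}\, f_{C'',C'}$$ as polynomial functions on $\mathfrak m$.
   Context: Let $n\ge 2$ and $G=SL(n,\mathbb C)$. Let $B$ be the upper triangular matrices in $G$, $H$ the diagonal ones, $\mathfrak h=\mathrm{Lie}(H)$ and $\mathfrak n$ the strictly upper triangular matrices. Write $x_{i,j}$ for the matrix unit with $1$ in position $(i,j)$. A composition $(c_1,\dots,c_k)$ of $n$ (positive integers with sum $n$) determines the standard parabolic subgroup $P\supseteq B$ of block upper triangular matrices with diagonal blocks of sizes $c_1,\dots,c_k$. Let $\mathfrak m$ be the Lie algebra of the unipotent radical of $P$, i.e. the span of the $x_{i,j}$ with $i<j$ lying in different diagonal blocks. Let $P'$ be the derived group of $P$, acting on $\mathfrak m$ by the adjoint action. Diagram and tableau: the composition is represented by columns $C_1,\dots,C_k$ from left to right, where $C_i$ consists of $c_i$ boxes placed in rows $R_1,\dots,R_{c_i}$ (rows numbered from top to bottom). The boxes are filled with $1,\dots,n$ so that $C_i$ contains $c_1+\dots+c_{i-1}+1,\dots,c_1+\dots+c_i$, increasing downwards. The height of $C_i$ is $c_i$. Two columns of the same height $s$ are called neighbouring if no column of height $s$ lies strictly between them. The function $f_{C,C'}$: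 for two columns $C$ (left) and $C'$ (right) of the same height $s$, let $J$ be the interval of integers from the smallest entry of $C$ to the largest entry of $C'$, and $N=|J|$. For $X\in\mathfrak m$ let $X_J$ be the $N\times N$ principal submatrix of $X$ with rows and columns indexed by $J$. For an indeterminate $a$, let $M_{C,C'}(X,a)$ be the determinant of the $(N-s)\times(N-s)$ submatrix of $X_J+a\,\mathrm{Id}_N$ formed by its first $N-s$ rows and its last $N-s$ columns. Let $d$ be the number of boxes lying strictly below row $R_s$ in the columns strictly between $C$ and $C'$. Then $M_{C,C'}(X,a)$ is divisible by $a^{d}$ as a polynomial in $a$, and $f_{C,C'}(X)$ is defined as the value at $a=0$ of $a^{-d}M_{C,C'}(X,a)$ (the Benlolo–Sanderson invariant of the pair $C,C'$ when $C,C'$ are neighbouring). *)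

theory Defs
  imports "Jordan_Normal_Form.Determinant" "HOL-Computational_Algebra.Polynomial"
begin

text \<open>Conventions: everything is 0-based. A composition is a list c of positive
naturals; column i (0-based) contains the entries col_start c i, ...,
col_start c (Suc i) - 1 (0-based matrix indices).\<close>

definition col_start :: "nat list \<Rightarrow> nat \<Rightarrow> nat" where
  "col_start c i = sum_list (take i c)"

definition is_composition :: "nat list \<Rightarrow> nat \<Rightarrow> bool" where
  "is_composition c n \<longleftrightarrow> (\<forall>x\<in>set c. 0 < x) \<and> sum_list c = n"

definition in_nilrad :: "nat list \<Rightarrow> nat \<Rightarrow> complex mat \<Rightarrow> bool" where
  "in_nilrad c n X \<longleftrightarrow> X \<in> carrier_mat n n \<and>
     (\<forall>k<n. \<forall>l<n. X $$ (k,l) \<noteq> 0 \<longrightarrow>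
        (\<exists>i j. i < j \<and> j < length c \<and>
           col_start c i \<le> k \<and> k < col_start c (Suc i) \<and>
           col_start c j \<le> l \<and> l < col_start c (Suc j)))"

text \<open>M_{C,C'}(X,a) as a polynomial in a, for columns i (left) and i' (right).\<close>
definition M_poly :: "nat list \<Rightarrow> nat \<Rightarrow> nat \<Rightarrow> complex mat \<Rightarrow> complex poly" where
  "M_poly c i i' X =
    (let p = col_start c i; N = col_start c (Suc i') - p; s = c ! i in
     det (mat (N - s) (N - s)
       (\<lambda>(r, q). [: X $$ (p + r, p + q + s) :] + (if r = q + s then [:0, 1:] else 0))))"

text \<open>d: number of boxes strictly below row s in columns strictly between i and i'.\<close>
definition d_boxes :: "nat list \<Rightarrow> nat \<Rightarrow> nat \<Rightarrow> nat" where
  "d_boxes c i i' = (\<Sum>j\<in>{i<..<i'}. c ! j - c ! i)"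

definition f_inv :: "nat list \<Rightarrow> nat \<Rightarrow> nat \<Rightarrow> complex mat \<Rightarrow> complex" where
  "f_inv c i i' X = poly (M_poly c i i' X div [:0, 1:] ^ d_boxes c i i') 0"

end

theory Submission
  imports Defs
begin

lemma cs_Suc: "w < length c \<Longrightarrow> col_start c (Suc w) = col_start c w + c ! w"
  by (simp add: col_start_def take_Suc_conv_app_nth)

lemma cs_mono: "a \<le> b \<Longrightarrow> col_start c a \<le> col_start c b"
proof -
  assume "a \<le> b"
  then obtain e where "b = a + e" using le_Suc_ex by blast
  thus ?thesis by (simp add: col_start_def take_add)
qed

lemma cs_le_n: "is_composition c n \<Longrightarrow> col_start c a \<le> n"
  unfolding is_composition_def col_start_def
  by (metis append_take_drop_id le_add1 sum_list_append)

lemma nz_block: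
  assumes "in_nilrad c n X" "k < n" "l < n" "X $$ (k,l) \<noteq> 0" "col_start c w \<le> k"
  shows "col_start c (Suc w) \<le> l"
proof -
  obtain i0 j0 where ij: "i0 < j0" "j0 < length c" "col_start c i0 \<le> k" "k < col_start c (Suc i0)"
    "col_start c j0 \<le> l" "l < col_start c (Suc j0)"
    using assms unfolding in_nilrad_def by blast
  have "w \<le> i0"
  proof (rule ccontr)
    assume "\<not> w \<le> i0"
    hence "Suc i0 \<le> w" by simp
    hence "col_start c (Suc i0) \<le> col_start c w" by (rule cs_mono)
    thus False using ij assms(5) by simp
  qed
  hence "Suc w \<le> j0" using ij by simp
  hence "col_start c (Suc w) \<le> col_start c j0" by (rule cs_mono)
  thus ?thesis using ij by simp
qed

lemma diag0:
  assumes "in_nilrad c n X" "k < n"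
  shows "X $$ (k,k) = 0"
proof (rule ccontr)
  assume "X $$ (k,k) \<noteq> 0"
  then obtain i0 j0 where ij: "i0 < j0" "j0 < length c" "col_start c i0 \<le> k" "k < col_start c (Suc i0)"
    "col_start c j0 \<le> k"
    using assms unfolding in_nilrad_def by blast
  have "col_start c (Suc i0) \<le> col_start c j0" using ij by (intro cs_mono) simp
  thus False using ij by simp
qed

definition Mg :: "complex mat \<Rightarrow> nat \<Rightarrow> nat \<Rightarrow> nat \<Rightarrow> nat set \<Rightarrow> complex poly mat" where
  "Mg X p s K Z = mat K K (\<lambda>(r,q). [: X $$ (p+r, p+q+s) :] + (if r = q+s \<and> r \<notin> Z then [:0,1:] else 0))"

definition ec :: "complex mat \<Rightarrow> nat \<Rightarrow> nat \<Rightarrow> nat set \<Rightarrow> nat \<Rightarrow> nat \<Rightarrow> complex" where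
  "ec X p s Z r q = (if r = q+s then (if r \<in> Z then 0 else 1) else X $$ (p+r, p+q+s))"

definition jc :: "nat \<Rightarrow> nat set \<Rightarrow> nat \<Rightarrow> (nat \<Rightarrow> nat) \<Rightarrow> nat" where
  "jc s Z K \<sigma> = card {r \<in> {0..<K}. r = \<sigma> r + s \<and> r \<notin> Z}"

lemma prod_monom: "finite A \<Longrightarrow> (\<Prod>x\<in>A. monom (f x) (g x)) = monom (\<Prod>x\<in>A. f x) (\<Sum>x\<in>A. g x)"
  by (induct A rule: finite_induct) (auto simp: mult_monom monom_0 one_pCons)

lemma Mg_entry:
  assumes "r < K" "q < K" "r = q + s \<Longrightarrow> X $$ (p+r,p+r) = 0"
  shows "Mg X p s K Z $$ (r,q) = monom (ec X p s Z r q) (if r = q+s \<and> r \<notin> Z then 1 else 0)"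
  using assms by (auto simp: Mg_def ec_def monom_0 monom_Suc add.assoc)

lemma sum_ind_card: "finite A \<Longrightarrow> (\<Sum>x\<in>A. if P x then 1 else 0::nat) = card {x\<in>A. P x}"
  by (simp add: sum.If_cases Int_def conj_commute)

lemma Mg_term:
  assumes "\<sigma> permutes {0..<K}" "\<And>r. r < K \<Longrightarrow> X $$ (p+r,p+r) = 0"
  shows "(\<Prod>r = 0..<K. Mg X p s K Z $$ (r, \<sigma> r)) = monom (\<Prod>r = 0..<K. ec X p s Z r (\<sigma> r)) (jc s Z K \<sigma>)"
proof -
  have sk: "\<sigma> r < K" if "r < K" for r using assms(1) that
    by (meson atLeastLessThan_iff permutes_in_image zero_le)
  have "(\<Prod>r = 0..<K. Mg X p s K Z $$ (r, \<sigma> r)) =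
     (\<Prod>r = 0..<K. monom (ec X p s Z r (\<sigma> r)) (if r = \<sigma> r + s \<and> r \<notin> Z then 1 else 0))"
    by (rule prod.cong, simp, rule Mg_entry) (auto simp: sk assms(2))
  also have "\<dots> = monom (\<Prod>r = 0..<K. ec X p s Z r (\<sigma> r)) (jc s Z K \<sigma>)"
    by (simp add: prod_monom sum_ind_card jc_def)
  finally show ?thesis .
qed

lemma coeff_det_Mg:
  assumes "\<And>r. r < K \<Longrightarrow> X $$ (p+r,p+r) = 0"
  shows "coeff (det (Mg X p s K Z)) j = (\<Sum>\<sigma>\<in>{\<sigma>. \<sigma> permutes {0..<K}}.
     if jc s Z K \<sigma> = j then of_int (sign \<sigma>) * (\<Prod>r = 0..<K. ec X p s Z r (\<sigma> r)) else 0)"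
proof -
  have "Mg X p s K Z \<in> carrier_mat K K" by (simp add: Mg_def)
  hence "det (Mg X p s K Z) = (\<Sum>\<sigma>\<in>{\<sigma>. \<sigma> permutes {0..<K}}. signof \<sigma> * (\<Prod>r = 0..<K. Mg X p s K Z $$ (r, \<sigma> r)))"
    by (rule det_def')
  also have "\<dots> = (\<Sum>\<sigma>\<in>{\<sigma>. \<sigma> permutes {0..<K}}. monom (of_int (sign \<sigma>) * (\<Prod>r = 0..<K. ec X p s Z r (\<sigma> r))) (jc s Z K \<sigma>))"
    by (rule sum.cong, simp) (simp add: Mg_term assms of_int_poly smult_monom)
  finally show ?thesis by (simp add: coeff_sum coeff_monom)
qed


context
  fixes c n i i2 X
  assumes comp: "is_composition c n" and ii2: "i < i2" and i2l: "i2 < length c"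
    and ceq: "c ! i2 = c ! i" and nil: "in_nilrad c n X"
begin

lemma pK: "col_start c i \<le> col_start c i2" using ii2 by (intro cs_mono) simp

lemma bound_n: "col_start c i2 + c ! i \<le> n"
  using cs_Suc[OF i2l] cs_le_n[OF comp, of "Suc i2"] ceq by simp

lemma PB:
  fixes Z \<sigma> w
  defines "p \<equiv> col_start c i" and "s \<equiv> c ! i" and "K \<equiv> col_start c i2 - col_start c i"
  assumes perm: "\<sigma> permutes {0..<K}" and nz: "\<And>r. r < K \<Longrightarrow> ec X p s Z r (\<sigma> r) \<noteq> 0"
    and w: "i < w" "w < i2"
  shows "c ! w - s \<le> card {r \<in> {col_start c w - p..<col_start c w - p + c ! w}. r = \<sigma> r + s \<and> r \<notin> Z}"
proof (cases "c ! w \<le> s")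
  case True thus ?thesis by simp
next
  case False
  define t where "t = col_start c w - p"
  define h where "h = c ! w"
  have pw: "p \<le> col_start c w" unfolding p_def using w by (intro cs_mono) simp
  have wl: "w < length c" using w i2l by simp
  have csw: "col_start c (Suc w) = col_start c w + h" using cs_Suc[OF wl] h_def by simp
  have "col_start c (Suc w) \<le> col_start c i2" using w by (intro cs_mono) simp
  hence thK: "t + h \<le> K" unfolding t_def K_def using csw pw p_def by simp
  have sK: "\<sigma> r < K" if "r < K" for r using perm that
    by (meson atLeastLessThan_iff permutes_in_image zero_le)
  have injs: "inj_on \<sigma> B" for B using perm by (meson permutes_inj inj_on_subset subset_UNIV)
  define S where "S = {t..<K}"
  define A where "A = {r\<in>S. \<sigma> r < t + h - s}"
  define B where "B = {r\<in>S. \<not> \<sigma> r < t + h - s}"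
  have "\<sigma> ` B \<subseteq> {t + h - s..<K}" unfolding B_def S_def using sK by auto
  hence "card (\<sigma> ` B) \<le> card {t + h - s..<K}" by (intro card_mono) auto
  hence "card (\<sigma> ` B) \<le> K - (t + h - s)" by simp
  hence cB: "card B \<le> K - (t + h - s)" using card_image[OF injs[of B]] by simp
  have "S = A \<union> B" "A \<inter> B = {}" unfolding A_def B_def by auto
  moreover have "finite A" "finite B" unfolding A_def B_def S_def by auto
  ultimately have "card A + card B = card S" using card_Un_disjoint[of A B] by simp
  hence cA: "h - s \<le> card A" using cB thK False h_def unfolding S_def by simp
  have "A \<subseteq> {r \<in> {t..<t + h}. r = \<sigma> r + s \<and> r \<notin> Z}"
  proof
    fix r assume rA: "r \<in> A"
    hence rK: "r < K" and tr: "t \<le> r" and sr: "\<sigma> r < t + h - s" unfolding A_def S_def by auto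
    show "r \<in> {r \<in> {t..<t + h}. r = \<sigma> r + s \<and> r \<notin> Z}"
    proof (cases "r = \<sigma> r + s")
      case True
      thus ?thesis using nz[OF rK] sr tr False h_def unfolding ec_def by (auto split: if_splits)
    next
      case F: False
      hence X0: "X $$ (p + r, p + \<sigma> r + s) \<noteq> 0" using nz[OF rK] unfolding ec_def by simp
      have "p + K + s \<le> n" using bound_n pK unfolding p_def K_def s_def by simp
      hence "col_start c (Suc w) \<le> p + \<sigma> r + s"
        using nz_block[OF nil _ _ X0, of w] rK sK[OF rK] tr pw unfolding t_def by simp
      hence False using sr csw pw False h_def unfolding t_def by simp
      thus ?thesis ..
    qed
  qed
  hence "card A \<le> card {r \<in> {t..<t + h}. r = \<sigma> r + s \<and> r \<notin> Z}" by (intro card_mono) auto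
  thus ?thesis using cA unfolding t_def h_def by simp
qed


lemma JB:
  fixes Z \<sigma>
  defines "p \<equiv> col_start c i" and "s \<equiv> c ! i" and "K \<equiv> col_start c i2 - col_start c i"
  assumes perm: "\<sigma> permutes {0..<K}" and nz: "\<And>r. r < K \<Longrightarrow> ec X p s Z r (\<sigma> r) \<noteq> 0"
  shows "(\<Sum>w\<in>{i<..<i2}. card {r \<in> {col_start c w - p..<col_start c w - p + c ! w}. r = \<sigma> r + s \<and> r \<notin> Z})
     \<le> jc s Z K \<sigma>"
proof -
  define T where "T w = {r \<in> {col_start c w - p..<col_start c w - p + c ! w}. r = \<sigma> r + s \<and> r \<notin> Z}" for w
  have sub: "T w \<subseteq> {r \<in> {0..<K}. r = \<sigma> r + s \<and> r \<notin> Z}" if w: "w \<in> {i<..<i2}" for w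
  proof -
    have wl: "w < length c" using w i2l by simp
    have "col_start c (Suc w) \<le> col_start c i2" using w by (intro cs_mono) simp
    moreover have "p \<le> col_start c w" unfolding p_def using w by (intro cs_mono) simp
    ultimately have "col_start c w - p + c ! w \<le> K" using cs_Suc[OF wl] unfolding K_def p_def by simp
    thus ?thesis unfolding T_def by auto
  qed
  have disj: "T w \<inter> T w' = {}" if "w \<in> {i<..<i2}" "w' \<in> {i<..<i2}" "w \<noteq> w'" for w w'
  proof -
    have gen: "T u \<inter> T u' = {}" if "u \<in> {i<..<i2}" "u' \<in> {i<..<i2}" "u < u'" for u u'
    proof -
      have ul: "u < length c" using that i2l by simp
      have "col_start c (Suc u) \<le> col_start c u'" using that by (intro cs_mono) simp
      moreover have "p \<le> col_start c u" unfolding p_def using that by (intro cs_mono) simp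
      ultimately have "col_start c u - p + c ! u \<le> col_start c u' - p" using cs_Suc[OF ul] by simp
      thus ?thesis unfolding T_def by auto
    qed
    show ?thesis using that gen[of w w'] gen[of w' w] by (cases "w < w'") auto
  qed
  have "(\<Sum>w\<in>{i<..<i2}. card (T w)) = card (\<Union>w\<in>{i<..<i2}. T w)"
  proof (rule card_UN_disjoint[symmetric])
    show "\<forall>w\<in>{i<..<i2}. finite (T w)" by (simp add: T_def)
    show "\<forall>w\<in>{i<..<i2}. \<forall>w'\<in>{i<..<i2}. w \<noteq> w' \<longrightarrow> T w \<inter> T w' = {}" using disj by blast
  qed simp
  also have "\<dots> \<le> card {r \<in> {0..<K}. r = \<sigma> r + s \<and> r \<notin> Z}"
    by (rule card_mono, simp, rule UN_least, rule sub)
  finally show ?thesis unfolding T_def jc_def .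
qed

lemma diagK: "r < col_start c i2 - col_start c i \<Longrightarrow> X $$ (col_start c i + r, col_start c i + r) = 0"
  by (rule diag0[OF nil]) (use bound_n pK in simp)

lemma LB:
  defines "p \<equiv> col_start c i" and "s \<equiv> c ! i" and "K \<equiv> col_start c i2 - col_start c i"
  assumes j: "j < d_boxes c i i2"
  shows "coeff (det (Mg X p s K {})) j = 0"
proof -
  have "coeff (det (Mg X p s K {})) j = (\<Sum>\<sigma>\<in>{\<sigma>. \<sigma> permutes {0..<K}}.
     if jc s {} K \<sigma> = j then of_int (sign \<sigma>) * (\<Prod>r = 0..<K. ec X p s {} r (\<sigma> r)) else 0)"
    by (rule coeff_det_Mg) (use diagK in \<open>simp add: p_def K_def\<close>)
  also have "\<dots> = 0"
  proof (rule sum.neutral, intro ballI)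
    fix \<sigma> assume "\<sigma> \<in> {\<sigma>. \<sigma> permutes {0..<K}}"
    hence perm: "\<sigma> permutes {0..<K}" by simp
    show "(if jc s {} K \<sigma> = j then of_int (sign \<sigma>) * (\<Prod>r = 0..<K. ec X p s {} r (\<sigma> r)) else 0) = 0"
    proof (cases "\<forall>r<K. ec X p s {} r (\<sigma> r) \<noteq> 0")
      case True
      have "d_boxes c i i2 \<le> (\<Sum>w\<in>{i<..<i2}. card {r \<in> {col_start c w - p..<col_start c w - p + c ! w}. r = \<sigma> r + s \<and> r \<notin> {}})"
        unfolding d_boxes_def s_def
        by (rule sum_mono, rule PB[of \<sigma> "{}", folded p_def s_def K_def, unfolded s_def]) (use perm True in \<open>auto simp: s_def\<close>)
      also have "\<dots> \<le> jc s {} K \<sigma>"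
        by (rule JB[folded p_def s_def K_def]) (use perm True in auto)
      finally show ?thesis using j by auto
    next
      case False
      then obtain r where "r < K" "ec X p s {} r (\<sigma> r) = 0" by auto
      hence "(\<Prod>r = 0..<K. ec X p s {} r (\<sigma> r)) = 0" by (intro prod_zero) auto
      thus ?thesis by simp
    qed
  qed
  finally show ?thesis .
qed

lemma Mpoly_eq:
  "M_poly c i i2 X = det (Mg X (col_start c i) (c ! i) (col_start c i2 - col_start c i) {})"
proof -
  have "col_start c (Suc i2) - col_start c i - c ! i = col_start c i2 - col_start c i"
    using cs_Suc[OF i2l] ceq pK by simp
  thus ?thesis unfolding M_poly_def Mg_def Let_def by simp
qed

lemma f_eq:
  "f_inv c i i2 X = coeff (det (Mg X (col_start c i) (c ! i) (col_start c i2 - col_start c i) {})) (d_boxes c i i2)"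
proof -
  define P where "P = det (Mg X (col_start c i) (c ! i) (col_start c i2 - col_start c i) {})"
  define d where "d = d_boxes c i i2"
  have "monom 1 d dvd P" unfolding monom_1_dvd_iff' P_def d_def using LB by auto
  then obtain Q where Q: "P = monom 1 d * Q" by (auto simp: dvd_def)
  have x: "[:0,1:] ^ d = (monom 1 d :: complex poly)" by (simp add: monom_altdef)
  have "f_inv c i i2 X = poly (P div [:0,1:] ^ d) 0" by (simp add: f_inv_def Mpoly_eq P_def d_def)
  also have "\<dots> = poly (P div monom 1 d) 0" by (simp only: x)
  also have "\<dots> = coeff Q 0" using Q by (simp add: poly_0_coeff_0)
  also have "\<dots> = coeff P d" using Q by (simp add: coeff_monom_mult)
  finally show ?thesis unfolding P_def d_def .
qed

end


lemma main_eq: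
  assumes comp: "is_composition c n" and ik: "i < k" and ki': "k < i'" and i'l: "i' < length c"
    and ck: "c ! k = c ! i" and ci': "c ! i' = c ! i" and nil: "in_nilrad c n X"
  shows "f_inv c i i' X = f_inv c i k X * f_inv c k i' X"
proof -
  define p where "p = col_start c i"
  define s where "s = c ! i"
  define K where "K = col_start c i' - col_start c i"
  define a where "a = col_start c k - col_start c i"
  define Z0 where "Z0 = {a..<a+s}"
  define d where "d = d_boxes c i i'"
  have kl: "k < length c" using ki' i'l by simp
  have iil: "i < i'" using ik ki' by simp
  have pk: "p \<le> col_start c k" unfolding p_def using ik by (intro cs_mono) simp
  have csk: "col_start c (Suc k) = p + a + s" using cs_Suc[OF kl] ck pk unfolding a_def s_def p_def by simp
  have "col_start c (Suc k) \<le> col_start c i'" using ki' by (intro cs_mono) simp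
  hence asK: "a + s \<le> K" using csk unfolding K_def p_def by simp
  have bnd: "p + K + s \<le> n" using bound_n[OF comp iil i'l ci' nil] pK[OF comp iil i'l ci' nil]
    unfolding p_def K_def s_def by simp
  have diag: "\<And>r. r < K \<Longrightarrow> X $$ (p+r,p+r) = 0"
    using diagK[OF comp iil i'l ci' nil] unfolding p_def K_def by simp
  have stepA: "coeff (det (Mg X p s K {})) d = coeff (det (Mg X p s K Z0)) d"
  proof -
    have "coeff (det (Mg X p s K {})) d = (\<Sum>\<sigma>\<in>{\<sigma>. \<sigma> permutes {0..<K}}.
       if jc s {} K \<sigma> = d then of_int (sign \<sigma>) * (\<Prod>r = 0..<K. ec X p s {} r (\<sigma> r)) else 0)"
      by (rule coeff_det_Mg) (rule diag)
    also have "\<dots> = (\<Sum>\<sigma>\<in>{\<sigma>. \<sigma> permutes {0..<K}}.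
       if jc s Z0 K \<sigma> = d then of_int (sign \<sigma>) * (\<Prod>r = 0..<K. ec X p s Z0 r (\<sigma> r)) else 0)"
    proof (rule sum.cong, simp)
      fix \<sigma> assume "\<sigma> \<in> {\<sigma>. \<sigma> permutes {0..<K}}"
      hence perm: "\<sigma> permutes {0..<K}" by simp
      show "(if jc s {} K \<sigma> = d then of_int (sign \<sigma>) * (\<Prod>r = 0..<K. ec X p s {} r (\<sigma> r)) else 0) =
            (if jc s Z0 K \<sigma> = d then of_int (sign \<sigma>) * (\<Prod>r = 0..<K. ec X p s Z0 r (\<sigma> r)) else 0)"
      proof (cases "\<exists>r<K. r \<in> Z0 \<and> r = \<sigma> r + s")
        case True
        then obtain r0 where r0: "r0 < K" "r0 \<in> Z0" "r0 = \<sigma> r0 + s" by blast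
        have "ec X p s Z0 r0 (\<sigma> r0) = 0" using r0 unfolding ec_def by simp
        hence R: "(\<Prod>r = 0..<K. ec X p s Z0 r (\<sigma> r)) = 0" using r0 by (intro prod_zero) auto
        have L: "(if jc s {} K \<sigma> = d then of_int (sign \<sigma>) * (\<Prod>r = 0..<K. ec X p s {} r (\<sigma> r)) else 0) = 0"
        proof (cases "\<forall>r<K. ec X p s {} r (\<sigma> r) \<noteq> 0")
          case nz: True
          define T where "T w = card {r \<in> {col_start c w - p..<col_start c w - p + c ! w}. r = \<sigma> r + s \<and> r \<notin> {}}" for w
          have "(\<Sum>w\<in>{i<..<i'}. c ! w - s) < (\<Sum>w\<in>{i<..<i'}. T w)"
          proof (rule sum_strict_mono_ex1)
            show "finite {i<..<i'}" by simp
            show "\<forall>w\<in>{i<..<i'}. c ! w - s \<le> T w"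
            proof
              fix w assume w: "w \<in> {i<..<i'}"
              have "c ! w - c ! i \<le> card {r \<in> {col_start c w - col_start c i..<col_start c w - col_start c i + c ! w}. r = \<sigma> r + c ! i \<and> r \<notin> {}}"
                by (rule PB[OF comp iil i'l ci' nil]) (use perm nz w in \<open>auto simp: K_def p_def s_def\<close>)
              thus "c ! w - s \<le> T w" unfolding T_def p_def s_def .
            qed
            have "r0 \<in> {r \<in> {col_start c k - p..<col_start c k - p + c ! k}. r = \<sigma> r + s \<and> r \<notin> {}}"
              using r0 ck unfolding Z0_def a_def p_def s_def by auto
            hence "0 < T k" unfolding T_def by (subst card_gt_0_iff) auto
            moreover have "c ! k - s = 0" using ck s_def by simp
            ultimately show "\<exists>w\<in>{i<..<i'}. c ! w - s < T w" using ik ki' by (intro bexI[of _ k]) auto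
          qed
          also have "\<dots> \<le> jc s {} K \<sigma>"
            unfolding T_def p_def s_def K_def
            by (rule JB[OF comp iil i'l ci' nil]) (use perm nz in \<open>auto simp: K_def p_def s_def\<close>)
          finally have "d < jc s {} K \<sigma>" unfolding d_def d_boxes_def s_def .
          thus ?thesis by simp
        next
          case False
          then obtain r where "r < K" "ec X p s {} r (\<sigma> r) = 0" by auto
          hence "(\<Prod>r = 0..<K. ec X p s {} r (\<sigma> r)) = 0" by (intro prod_zero) auto
          thus ?thesis by simp
        qed
        show ?thesis using L R by simp
      next
        case False
        have e: "(\<Prod>r = 0..<K. ec X p s {} r (\<sigma> r)) = (\<Prod>r = 0..<K. ec X p s Z0 r (\<sigma> r))"
          by (rule prod.cong) (use False in \<open>auto simp: ec_def\<close>)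
        have "jc s {} K \<sigma> = jc s Z0 K \<sigma>" unfolding jc_def
          by (rule arg_cong[where f=card]) (use False in auto)
        thus ?thesis using e by simp
      qed
    qed
    also have "\<dots> = coeff (det (Mg X p s K Z0)) d"
      by (rule coeff_det_Mg[symmetric]) (rule diag)
    finally show ?thesis .
  qed
  define M1 where "M1 = Mg X p s a {}"
  define M2 where "M2 = Mg X (p + a) s (K - a) {}"
  define B where "B = mat a (K - a) (\<lambda>(r,q). Mg X p s K Z0 $$ (r, q + a))"
  have blk: "Mg X p s K Z0 = four_block_mat M1 B (0\<^sub>m (K - a) a) M2"
  proof (rule eq_matI)
    show "dim_row (Mg X p s K Z0) = dim_row (four_block_mat M1 B (0\<^sub>m (K - a) a) M2)"
      using asK by (simp add: Mg_def M1_def M2_def)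
    show "dim_col (Mg X p s K Z0) = dim_col (four_block_mat M1 B (0\<^sub>m (K - a) a) M2)"
      using asK by (simp add: Mg_def M1_def M2_def)
    fix r q assume r: "r < dim_row (four_block_mat M1 B (0\<^sub>m (K - a) a) M2)"
      and q: "q < dim_col (four_block_mat M1 B (0\<^sub>m (K - a) a) M2)"
    hence rK: "r < K" and qK: "q < K" using asK by (auto simp: M1_def M2_def Mg_def)
    show "Mg X p s K Z0 $$ (r, q) = four_block_mat M1 B (0\<^sub>m (K - a) a) M2 $$ (r, q)"
    proof (cases "r < a")
      case ra: True
      show ?thesis
      proof (cases "q < a")
        case True thus ?thesis using ra rK qK r q by (simp add: M1_def M2_def Mg_def Z0_def)
      next
        case False thus ?thesis using ra rK qK r q by (simp add: M1_def M2_def Mg_def B_def)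
      qed
    next
      case ra: False
      show ?thesis
      proof (cases "q < a")
        case qa: True
        have "Mg X p s K Z0 $$ (r, q) = 0"
        proof (cases "r = q + s")
          case True
          thus ?thesis using ra qa rK qK diag[OF rK] by (simp add: Mg_def Z0_def add.assoc)
        next
          case False
          have "X $$ (p + r, p + q + s) = 0"
          proof (rule ccontr)
            assume X0: "X $$ (p + r, p + q + s) \<noteq> 0"
            have "col_start c (Suc k) \<le> p + q + s"
              by (rule nz_block[OF nil _ _ X0]) (use rK qK bnd ra pk a_def p_def in auto)
            thus False using csk qa by simp
          qed
          thus ?thesis using False rK qK by (simp add: Mg_def)
        qed
        thus ?thesis using ra qa r q by (simp add: M1_def M2_def Mg_def)
      next
        case qa: False
        thus ?thesis using ra rK qK r q by (auto simp: M1_def M2_def Mg_def Z0_def algebra_simps)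
      qed
    qed
  qed
  have detB: "det (Mg X p s K Z0) = det M1 * det M2"
    unfolding blk by (rule det_four_block_mat_lower_left_zero) (auto simp: M1_def M2_def Mg_def B_def)
  define d1 where "d1 = d_boxes c i k"
  define d2 where "d2 = d_boxes c k i'"
  have f1: "f_inv c i k X = coeff (det M1) d1"
    unfolding M1_def d1_def p_def s_def a_def by (rule f_eq[OF comp ik kl ck nil])
  have f2: "f_inv c k i' X = coeff (det M2) d2"
  proof -
    have "f_inv c k i' X = coeff (det (Mg X (col_start c k) (c ! k) (col_start c i' - col_start c k) {})) d2"
      unfolding d2_def by (rule f_eq[OF comp ki' i'l _ nil]) (simp add: ck ci')
    moreover have "col_start c k = p + a" "c ! k = s" "col_start c i' - col_start c k = K - a"
      using pk ck unfolding a_def p_def s_def K_def by auto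
    ultimately show ?thesis unfolding M2_def by simp
  qed
  have f0: "f_inv c i i' X = coeff (det (Mg X p s K {})) d"
    unfolding p_def s_def K_def d_def by (rule f_eq[OF comp iil i'l ci' nil])
  have z1: "coeff (det M1) x = 0" if "x < d1" for x
    using LB[OF comp ik kl ck nil] that unfolding M1_def d1_def p_def s_def a_def by simp
  have z2: "coeff (det M2) x = 0" if "x < d2" for x
  proof -
    have "coeff (det (Mg X (col_start c k) (c ! k) (col_start c i' - col_start c k) {})) x = 0"
      by (rule LB[OF comp ki' i'l _ nil]) (use ck ci' that d2_def in auto)
    moreover have "col_start c k = p + a" "c ! k = s" "col_start c i' - col_start c k = K - a"
      using pk ck unfolding a_def p_def s_def K_def by auto
    ultimately show ?thesis unfolding M2_def by simp
  qed
  have dd: "d = d1 + d2"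
  proof -
    have U: "{i<..<i'} = {i<..<k} \<union> {k} \<union> {k<..<i'}" using ik ki' by auto
    have "d = (\<Sum>w\<in>{i<..<k}. c ! w - c ! i) + (c ! k - c ! i) + (\<Sum>w\<in>{k<..<i'}. c ! w - c ! i)"
      unfolding d_def d_boxes_def U
      by (subst sum.union_disjoint, simp, simp, fastforce)+ (simp add: add.commute)
    thus ?thesis using ck unfolding d1_def d2_def d_boxes_def by simp
  qed
  have "coeff (det M1 * det M2) d = (\<Sum>x\<le>d. coeff (det M1) x * coeff (det M2) (d - x))"
    by (rule coeff_mult)
  also have "\<dots> = (\<Sum>x\<le>d. if x = d1 then coeff (det M1) d1 * coeff (det M2) d2 else 0)"
  proof (rule sum.cong, simp)
    fix x assume "x \<in> {..d}"
    thus "coeff (det M1) x * coeff (det M2) (d - x) = (if x = d1 then coeff (det M1) d1 * coeff (det M2) d2 else 0)"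
      using z1[of x] z2[of "d - x"] dd by (cases "x < d1") auto
  qed
  also have "\<dots> = coeff (det M1) d1 * coeff (det M2) d2" using dd by simp
  finally show ?thesis using f0 f1 f2 stepA detB by simp
qed

theorem lemma1p10:
  fixes c :: "nat list" and n i i'' i' :: nat
  assumes "n \<ge> 2" and "is_composition c n"
    and "i < i''" and "i'' < i'" and "i' < length c"
    and "c ! i'' = c ! i" and "c ! i' = c ! i"
    and "\<forall>j. i < j \<and> j < i' \<and> c ! j = c ! i \<longrightarrow> j = i''"
  shows "\<exists>lam::complex. lam \<noteq> 0 \<and>
    (\<forall>X. in_nilrad c n X \<longrightarrow>
       f_inv c i i' X = lam * f_inv c i i'' X * f_inv c i'' i' X)"
proof (rule exI[of _ 1], intro conjI allI impI)
  fix X assume "in_nilrad c n X"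
  thus "f_inv c i i' X = 1 * f_inv c i i'' X * f_inv c i'' i' X"
    using main_eq[OF assms(2-7)] by simp
qed simp

end
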